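(* Let $G$ be a Hausdorff topological group. (a) If $G$ is STAP then $G$ is HTAP, and if $G$ is HTAP then $G$ is TAP. (a-bis) If $G$ is abelian, then $G$ is HTAP if and only if $G$ is TAP. (b) Let $(D_i)_{i\in\mathbb N}$ be nontrivial discrete groups and $H=\{g\in\prod_i D_i:\{i:g(i)\ne e_{D_i}\}\text{ finite}\}$ with the topology induced from the product topology. Then $H$ is HTAP but not STAP. In particular, taking the $D_i$ finite abelian, there is a countable metrizable precompact abelian group which is TAP but not STAP.
   Context: $\prod_{k=1}^n a_k=a_1\cdots a_n$; $e$ is the neutral element. A sequence $(g_n)$ in $G$ is hyper-multipliable if for every integer sequence $(m_n)$ the sequence $\left(\prod_{k=1}^n g_k^{m_k}\right)_n$ converges in $G$; hyper-converging if $g_n^{m_n}\to e$ for every integer sequence $(m_n)$. A subset $A\subset G$ is absolutely productive if every sequence of pairwise distinct elements of $A$ is hyper-multipliable. $G$ is TAP if every absolutely productive subset of $G$ is finite; HTAP if no sequence of pairwise distinct elements of $G$ is hyper-multipliable; STAP if no sequence of pairwise distinct elements of $G$ is hyper-converging. *)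

theory Defs
  imports "HOL-Analysis.Analysis" "HOL-Algebra.Product_Groups"
begin

definition Hausdorff_topological_group :: "('a, 'b) monoid_scheme \<Rightarrow> 'a topology \<Rightarrow> bool" where
  "Hausdorff_topological_group G T \<longleftrightarrow>
     group G \<and> topspace T = carrier G \<and> Hausdorff_space T \<and>
     continuous_map (prod_topology T T) T (\<lambda>(x, y). x \<otimes>\<^bsub>G\<^esub> y) \<and>
     continuous_map T T (\<lambda>x. inv\<^bsub>G\<^esub> x)"

fun ordprod :: "('a, 'b) monoid_scheme \<Rightarrow> (nat \<Rightarrow> 'a) \<Rightarrow> nat \<Rightarrow> 'a" where
  "ordprod G a 0 = \<one>\<^bsub>G\<^esub>"
| "ordprod G a (Suc n) = ordprod G a n \<otimes>\<^bsub>G\<^esub> a n"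

definition hyper_multipliable :: "('a, 'b) monoid_scheme \<Rightarrow> 'a topology \<Rightarrow> (nat \<Rightarrow> 'a) \<Rightarrow> bool" where
  "hyper_multipliable G T g \<longleftrightarrow>
     (\<forall>m :: nat \<Rightarrow> int. \<exists>l. limitin T (\<lambda>n. ordprod G (\<lambda>k. g k [^]\<^bsub>G\<^esub> m k) n) l sequentially)"

definition hyper_converging :: "('a, 'b) monoid_scheme \<Rightarrow> 'a topology \<Rightarrow> (nat \<Rightarrow> 'a) \<Rightarrow> bool" where
  "hyper_converging G T g \<longleftrightarrow>
     (\<forall>m :: nat \<Rightarrow> int. limitin T (\<lambda>n. g n [^]\<^bsub>G\<^esub> m n) \<one>\<^bsub>G\<^esub> sequentially)"

definition absolutely_productive :: "('a, 'b) monoid_scheme \<Rightarrow> 'a topology \<Rightarrow> 'a set \<Rightarrow> bool" where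
  "absolutely_productive G T A \<longleftrightarrow>
     (\<forall>g. inj g \<and> range g \<subseteq> A \<longrightarrow> hyper_multipliable G T g)"

definition TAP :: "('a, 'b) monoid_scheme \<Rightarrow> 'a topology \<Rightarrow> bool" where
  "TAP G T \<longleftrightarrow> (\<forall>A. A \<subseteq> carrier G \<and> absolutely_productive G T A \<longrightarrow> finite A)"

definition HTAP :: "('a, 'b) monoid_scheme \<Rightarrow> 'a topology \<Rightarrow> bool" where
  "HTAP G T \<longleftrightarrow> \<not> (\<exists>g. inj g \<and> range g \<subseteq> carrier G \<and> hyper_multipliable G T g)"

definition STAP :: "('a, 'b) monoid_scheme \<Rightarrow> 'a topology \<Rightarrow> bool" where
  "STAP G T \<longleftrightarrow> \<not> (\<exists>g. inj g \<and> range g \<subseteq> carrier G \<and> hyper_converging G T g)"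

definition precompact_group :: "('a, 'b) monoid_scheme \<Rightarrow> 'a topology \<Rightarrow> bool" where
  "precompact_group G T \<longleftrightarrow>
     (\<forall>U. openin T U \<and> \<one>\<^bsub>G\<^esub> \<in> U \<longrightarrow>
        (\<exists>F. finite F \<and> F \<subseteq> carrier G \<and> carrier G \<subseteq> (\<Union>x\<in>F. x <#\<^bsub>G\<^esub> U)))"

definition fin_supp_topology :: "(nat \<Rightarrow> ('a, 'b) monoid_scheme) \<Rightarrow> (nat \<Rightarrow> 'a) topology" where
  "fin_supp_topology D =
     subtopology (product_topology (\<lambda>i. discrete_topology (carrier (D i))) UNIV)
                 (carrier (sum_group UNIV D))"

end

theory Submission
  imports Defs "HOL-Algebra.FiniteProduct"
begin

lemma htg_facts:
  assumes "Hausdorff_topological_group G T"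
  shows "group G" "topspace T = carrier G" "Hausdorff_space T"
    "continuous_map (prod_topology T T) T (\<lambda>(x, y). x \<otimes>\<^bsub>G\<^esub> y)"
    "continuous_map T T (\<lambda>x. inv\<^bsub>G\<^esub> x)"
  using assms by (simp_all add: Hausdorff_topological_group_def)

lemma htg_lim_diff:
  fixes G (structure)
  assumes H: "Hausdorff_topological_group G T"
    and P: "limitin T P l sequentially" and Q: "limitin T Q l sequentially"
  shows "limitin T (\<lambda>n. inv\<^bsub>G\<^esub> (P n) \<otimes>\<^bsub>G\<^esub> Q n) \<one>\<^bsub>G\<^esub> sequentially"
proof -
  interpret group G using htg_facts[OF H] by simp
  note ts = htg_facts(2)[OF H]
  note cm = htg_facts(4)[OF H]
  note ci = htg_facts(5)[OF H]
  have c1: "continuous_map (prod_topology T T) T (\<lambda>p. inv (fst p))"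
    using continuous_map_compose[OF continuous_map_fst ci] by (simp add: o_def)
  have c3: "continuous_map (prod_topology T T) (prod_topology T T) (\<lambda>p. (inv (fst p), snd p))"
    by (intro continuous_map_pairedI c1 continuous_map_snd)
  have c2: "continuous_map (prod_topology T T) T ((\<lambda>(x, y). x \<otimes> y) \<circ> (\<lambda>p. (inv (fst p), snd p)))"
    by (rule continuous_map_compose[OF c3 cm])
  have lim2: "limitin (prod_topology T T) (\<lambda>n. (P n, Q n)) (l, l) sequentially"
    using P Q by (simp add: limitin_pairwise o_def)
  from continuous_map_limit[OF c2 lim2]
  have "limitin T (\<lambda>n. inv (P n) \<otimes> Q n) (inv l \<otimes> l) sequentially" by (simp add: o_def)
  moreover have "l \<in> carrier G" using P ts by (simp add: limitin_def)
  ultimately show ?thesis by simp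
qed

lemma htg_nbhd:
  fixes G (structure)
  assumes H: "Hausdorff_topological_group G T" and U: "openin T U" "\<one>\<^bsub>G\<^esub> \<in> U"
  shows "\<exists>V. openin T V \<and> \<one>\<^bsub>G\<^esub> \<in> V \<and> (\<forall>x\<in>V. \<forall>y\<in>V. x \<otimes>\<^bsub>G\<^esub> y \<in> U)"
proof -
  interpret group G using htg_facts[OF H] by simp
  note ts = htg_facts(2)[OF H]
  note cm = htg_facts(4)[OF H]
  let ?M = "{p \<in> topspace (prod_topology T T). (\<lambda>(x, y). x \<otimes> y) p \<in> U}"
  have "openin (prod_topology T T) ?M"
    by (rule openin_continuous_map_preimage[OF cm U(1)])
  moreover have "(\<one>, \<one>) \<in> ?M"
    using U ts by simp
  ultimately have "\<exists>A B. openin T A \<and> openin T B \<and> \<one> \<in> A \<and> \<one> \<in> B \<and> A \<times> B \<subseteq> ?M"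
    unfolding openin_prod_topology_alt by (elim allE[of _ \<one>] allE[of _ \<one>]) (erule mp)
  then obtain A B where AB: "openin T A" "openin T B" "\<one> \<in> A" "\<one> \<in> B" "A \<times> B \<subseteq> ?M"
    by blast
  show ?thesis
    apply (rule exI[of _ "A \<inter> B"])
    using AB by (auto simp: openin_Int)
qed

lemma htg_translate_open:
  fixes G (structure)
  assumes H: "Hausdorff_topological_group G T" and s: "s \<in> carrier G" and W: "openin T W"
  shows "openin T {y \<in> carrier G. s \<otimes>\<^bsub>G\<^esub> y \<in> W}"
proof -
  interpret group G using htg_facts[OF H] by simp
  note ts = htg_facts(2)[OF H]
  note cm = htg_facts(4)[OF H]
  have c3: "continuous_map T (prod_topology T T) (\<lambda>y. (s, y))"
    using s ts by (intro continuous_map_pairedI) auto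
  have "continuous_map T T ((\<lambda>(x, y). x \<otimes> y) \<circ> (\<lambda>y. (s, y)))"
    by (rule continuous_map_compose[OF c3 cm])
  then have "continuous_map T T (\<lambda>y. s \<otimes> y)" by (simp add: o_def)
  from openin_continuous_map_preimage[OF this W] show ?thesis using ts by simp
qed

lemma ordprod_closed:
  fixes G (structure)
  assumes "group G" "\<And>k. a k \<in> carrier G" shows "ordprod G a n \<in> carrier G"
proof -
  interpret group G by fact
  show ?thesis by (induction n) (simp_all add: assms)
qed

lemma STAP_imp_HTAP:
  fixes G (structure)
  assumes H: "Hausdorff_topological_group G T" and S: "STAP G T" shows "HTAP G T"
proof -
  interpret group G using htg_facts[OF H] by simp
  have "hyper_converging G T g" if g: "inj g" "range g \<subseteq> carrier G" "hyper_multipliable G T g" for g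
    unfolding hyper_converging_def
  proof
    fix m :: "nat \<Rightarrow> int"
    define P where "P = (\<lambda>n. ordprod G (\<lambda>k. g k [^] m k) n)"
    obtain l where l: "limitin T P l sequentially"
      using g(3) unfolding hyper_multipliable_def P_def by blast
    have l2: "limitin T (\<lambda>n. P (Suc n)) l sequentially"
      using limitin_sequentially_offset[OF l, of 1] by simp
    have Pc: "P n \<in> carrier G" for n
      unfolding P_def using g(2) by (intro ordprod_closed) auto
    have "inv (P n) \<otimes> P (Suc n) = g n [^] m n" for n
    proof -
      have "g n [^] m n \<in> carrier G" using g(2) by auto
      then show ?thesis using Pc[of n] by (simp add: P_def m_assoc[symmetric])
    qed
    with htg_lim_diff[OF H l l2] show "limitin T (\<lambda>n. g n [^] m n) \<one> sequentially" by simp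
  qed
  with S show ?thesis unfolding STAP_def HTAP_def by blast
qed

lemma HTAP_imp_TAP:
  assumes "HTAP G T" shows "TAP G T"
  unfolding TAP_def
proof (intro allI impI)
  fix A assume A: "A \<subseteq> carrier G \<and> absolutely_productive G T A"
  show "finite A"
  proof (rule ccontr)
    assume "infinite A"
    then obtain f :: "nat \<Rightarrow> _" where "inj f" "range f \<subseteq> A" using infinite_countable_subset by blast
    with A assms show False unfolding absolutely_productive_def HTAP_def by blast
  qed
qed

lemma ordprod_finprod:
  fixes G (structure)
  assumes "comm_group G" "\<And>k. a k \<in> carrier G"
  shows "ordprod G a n = finprod G a {..<n}"
proof -
  interpret comm_group G by fact
  show ?thesis
  proof (induction n)
    case (Suc n)
    have "finprod G a {..<Suc n} = a n \<otimes> finprod G a {..<n}"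
      unfolding lessThan_Suc using assms(2) by (subst finprod_insert) auto
    then show ?case using Suc assms(2) by (simp add: m_comm)
  qed simp
qed

lemma finprod_if_subset:
  fixes G (structure)
  assumes "comm_monoid G" "finite A" "F \<subseteq> A" "\<And>k. x k \<in> carrier G"
  shows "finprod G (\<lambda>k. if k \<in> F then x k else \<one>) A = finprod G x F"
proof -
  interpret comm_monoid G by fact
  show ?thesis
    by (rule finprod_mono_neutral_cong_left[symmetric]) (use assms in auto)
qed

primrec blk :: "(nat \<Rightarrow> nat set) \<Rightarrow> nat \<Rightarrow> nat" where
  "blk B 0 = 0" | "blk B (Suc j) = Suc (Max (B (blk B j)))"

lemma uc:
  fixes G (structure)
  assumes H: "Hausdorff_topological_group G T" and C: "comm_group G"
    and x: "\<And>k. x k \<in> carrier G"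
    and S: "\<And>S. \<exists>l. limitin T (\<lambda>n. finprod G (\<lambda>k. if k \<in> S then x k else \<one>) {..<n}) l sequentially"
    and V: "openin T V" "\<one> \<in> V"
  shows "\<exists>N0. \<forall>F. finite F \<and> F \<subseteq> {N0..} \<longrightarrow> finprod G x F \<in> V"
proof (rule ccontr)
  interpret comm_group G by fact
  assume "\<not> ?thesis"
  then have "\<forall>N. \<exists>F. finite F \<and> F \<subseteq> {N..} \<and> finprod G x F \<notin> V" by blast
  then obtain B where B: "\<And>N. finite (B N)" "\<And>N. B N \<subseteq> {N..}" "\<And>N. finprod G x (B N) \<notin> V"
    by metis
  have Bne: "B N \<noteq> {}" for N using B(3)[of N] V(2) by auto
  define a where "a = blk B"
  have a_Suc: "a (Suc j) = Suc (Max (B (a j)))" for j by (simp add: a_def)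
  have Bsub: "B (a j) \<subseteq> {a j..<a (Suc j)}" for j
  proof
    fix k assume k: "k \<in> B (a j)"
    then have "a j \<le> k" "k \<le> Max (B (a j))" using B(1,2) by auto
    then show "k \<in> {a j..<a (Suc j)}" by (simp add: a_Suc)
  qed
  have alt: "a j < a (Suc j)" for j
  proof -
    obtain k where "k \<in> B (a j)" using Bne by blast
    then show ?thesis using Bsub[of j] by auto
  qed
  then have amono: "strict_mono a" by (simp add: strict_mono_Suc_iff)
  define S where "S = (\<Union>j. B (a j))"
  have inS: "k \<in> S \<longleftrightarrow> k \<in> B (a j)" if k: "k \<in> {a j..<a (Suc j)}" for k j
  proof
    assume "k \<in> S"
    then obtain i where i: "k \<in> B (a i)" by (auto simp: S_def)
    have "i = j"
    proof (rule ccontr)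
      assume "i \<noteq> j"
      then have "i < j \<or> j < i" by arith
      then show False
      proof
        assume "i < j"
        then have "a (Suc i) \<le> a j" using amono by (simp add: strict_mono_less_eq)
        then show False using i Bsub[of i] k by auto
      next
        assume "j < i"
        then have "a (Suc j) \<le> a i" using amono by (simp add: strict_mono_less_eq)
        then show False using i Bsub[of i] k by auto
      qed
    qed
    then show "k \<in> B (a j)" using i by simp
  qed (auto simp: S_def)
  define f where "f = (\<lambda>k. if k \<in> S then x k else \<one>)"
  have fc: "f k \<in> carrier G" for k using x by (simp add: f_def)
  define Q where "Q = (\<lambda>n. finprod G f {..<n})"
  have Qc: "Q n \<in> carrier G" for n using fc by (simp add: Q_def)
  have Qstep: "Q (a (Suc j)) = Q (a j) \<otimes> finprod G x (B (a j))" for j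
  proof -
    have un: "{..<a (Suc j)} = {..<a j} \<union> {a j..<a (Suc j)}" using alt[of j] by auto
    have "Q (a (Suc j)) = Q (a j) \<otimes> finprod G f {a j..<a (Suc j)}"
      unfolding Q_def un by (rule finprod_Un_disjoint) (use fc in auto)
    moreover have "finprod G f {a j..<a (Suc j)} = finprod G (\<lambda>k. if k \<in> B (a j) then x k else \<one>) {a j..<a (Suc j)}"
      by (rule finprod_cong) (use fc inS in \<open>auto simp: f_def simp_implies_def\<close>)
    moreover have "\<dots> = finprod G x (B (a j))"
      by (rule finprod_if_subset) (use Bsub x comm_monoid_axioms in auto)
    ultimately show ?thesis by simp
  qed
  obtain l where l: "limitin T Q l sequentially" using S[of S] unfolding Q_def f_def by blast
  have l1: "limitin T (\<lambda>j. Q (a j)) l sequentially"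
    using limitin_subsequence[OF amono l] by (simp add: o_def)
  have l2: "limitin T (\<lambda>j. Q (a (Suc j))) l sequentially"
    using limitin_sequentially_offset[OF l1, of 1] by simp
  have "limitin T (\<lambda>j. inv (Q (a j)) \<otimes> Q (a (Suc j))) \<one> sequentially"
    by (rule htg_lim_diff[OF H l1 l2])
  moreover have "inv (Q (a j)) \<otimes> Q (a (Suc j)) = finprod G x (B (a j))" for j
    using Qc[of "a j"] x by (simp add: Qstep m_assoc[symmetric])
  ultimately have "limitin T (\<lambda>j. finprod G x (B (a j))) \<one> sequentially" by simp
  then obtain N where "\<And>j. N \<le> j \<Longrightarrow> finprod G x (B (a j)) \<in> V"
    using V unfolding limitin_sequentially by blast
  then show False using B(3) by blast
qed

lemma rearr:
  fixes G (structure)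
  assumes H: "Hausdorff_topological_group G T" and C: "comm_group G"
    and x: "\<And>k. x k \<in> carrier G"
    and S: "\<And>S. \<exists>l. limitin T (\<lambda>n. finprod G (\<lambda>k. if k \<in> S then x k else \<one>) {..<n}) l sequentially"
    and \<sigma>: "inj \<sigma>" and z: "\<And>k. k \<notin> range \<sigma> \<Longrightarrow> x k = \<one>"
  shows "\<exists>l. limitin T (\<lambda>n. finprod G (\<lambda>j. x (\<sigma> j)) {..<n}) l sequentially"
proof -
  interpret comm_group G by fact
  note ts = htg_facts(2)[OF H]
  have xP: "x \<in> A \<rightarrow> carrier G" for A using x by auto
  obtain s where s: "limitin T (\<lambda>n. finprod G x {..<n}) s sequentially"
    using S[of UNIV] by auto
  have sc: "s \<in> carrier G" using s ts by (simp add: limitin_def)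
  have "limitin T (\<lambda>n. finprod G (\<lambda>j. x (\<sigma> j)) {..<n}) s sequentially"
    unfolding limitin_sequentially
  proof (intro conjI allI impI)
    show "s \<in> topspace T" using sc ts by simp
    fix W assume W: "openin T W \<and> s \<in> W"
    define W' where "W' = {y \<in> carrier G. s \<otimes> y \<in> W}"
    have W'o: "openin T W'" unfolding W'_def using htg_translate_open[OF H sc] W by blast
    have "\<one> \<in> W'" using W sc by (simp add: W'_def)
    then obtain V where V: "openin T V" "\<one> \<in> V" "\<And>a b. a\<in>V \<Longrightarrow> b\<in>V \<Longrightarrow> a \<otimes> b \<in> W'"
      using htg_nbhd[OF H W'o] by blast
    obtain N0 where N0: "\<And>F. finite F \<Longrightarrow> F \<subseteq> {N0..} \<Longrightarrow> finprod G x F \<in> V"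
      using uc[OF H C x S V(1,2)] by blast
    have sl: "limitin T (\<lambda>n. s) s sequentially" using sc ts by simp
    have "limitin T (\<lambda>n. inv s \<otimes> finprod G x {..<n}) \<one> sequentially"
      using htg_lim_diff[OF H sl s] by simp
    then obtain K1 where K1: "\<And>K. K1 \<le> K \<Longrightarrow> inv s \<otimes> finprod G x {..<K} \<in> V"
      using V(1,2) unfolding limitin_sequentially by blast
    define K where "K = max N0 K1"
    have fin: "finite (\<sigma> -` {..<K})" by (rule finite_vimageI) (use \<sigma> in auto)
    define N where "N = Suc (Max (insert 0 (\<sigma> -` {..<K})))"
    have pre: "\<sigma> -` {..<K} \<subseteq> {..<n}" if "N \<le> n" for n
    proof
      fix j assume "j \<in> \<sigma> -` {..<K}"
      then have "j \<le> Max (insert 0 (\<sigma> -` {..<K}))" using fin by simp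
      then show "j \<in> {..<n}" using that by (simp add: N_def)
    qed
    show "\<exists>N. \<forall>n. N \<le> n \<longrightarrow> finprod G (\<lambda>j. x (\<sigma> j)) {..<n} \<in> W"
    proof (intro exI allI impI)
      fix n assume n: "N \<le> n"
      let ?E = "\<sigma> ` {..<n}"
      have e1: "finprod G (\<lambda>j. x (\<sigma> j)) {..<n} = finprod G x ?E"
        by (rule finprod_reindex[symmetric]) (use \<sigma> xP in \<open>auto intro: inj_on_subset\<close>)
      have split: "(?E \<inter> {..<K}) \<union> (?E \<inter> {K..}) = ?E" by auto
      have e2: "finprod G x ?E = finprod G x (?E \<inter> {..<K}) \<otimes> finprod G x (?E \<inter> {K..})"
      proof -
        have d: "(?E \<inter> {..<K}) \<inter> (?E \<inter> {K..}) = {}" by auto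
        show ?thesis
          using finprod_Un_disjoint[of "?E \<inter> {..<K}" "?E \<inter> {K..}" x, OF _ _ d xP xP] unfolding split by simp
      qed
      have e3: "finprod G x (?E \<inter> {..<K}) = finprod G x {..<K}"
      proof -
        have zz: "x i = \<one>" if i: "i \<in> {..<K} - ?E" for i
        proof (rule z)
          show "i \<notin> range \<sigma>"
          proof
            assume "i \<in> range \<sigma>"
            then obtain j where j: "i = \<sigma> j" by blast
            then have "j \<in> {..<n}" using pre[OF n] i by auto
            then show False using i j by auto
          qed
        qed
        show ?thesis
          by (rule finprod_mono_neutral_cong_left[of "{..<K}" "?E \<inter> {..<K}" x x]) (use zz xP in auto)
      qed
      have fV: "finprod G x (?E \<inter> {K..}) \<in> V" by (rule N0) (auto simp: K_def)
      have kV: "inv s \<otimes> finprod G x {..<K} \<in> V" by (rule K1) (simp add: K_def)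
      have "(inv s \<otimes> finprod G x {..<K}) \<otimes> finprod G x (?E \<inter> {K..}) \<in> W'"
        using V(3) fV kV by blast
      then have "s \<otimes> ((inv s \<otimes> finprod G x {..<K}) \<otimes> finprod G x (?E \<inter> {K..})) \<in> W"
        by (simp add: W'_def)
      moreover have "s \<otimes> ((inv s \<otimes> finprod G x {..<K}) \<otimes> finprod G x (?E \<inter> {K..}))
          = finprod G x {..<K} \<otimes> finprod G x (?E \<inter> {K..})"
        using sc xP by (simp add: m_assoc[symmetric])
      ultimately show "finprod G (\<lambda>j. x (\<sigma> j)) {..<n} \<in> W" using e1 e2 e3 by simp
    qed
  qed
  then show ?thesis by blast
qed

lemma TAP_imp_HTAP_comm:
  fixes G (structure)
  assumes H: "Hausdorff_topological_group G T" and C: "comm_group G" and TP: "TAP G T"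
  shows "HTAP G T"
proof -
  interpret comm_group G by fact
  have False if g: "inj g" "range g \<subseteq> carrier G" "hyper_multipliable G T g" for g
  proof -
    have "absolutely_productive G T (range g)"
      unfolding absolutely_productive_def
    proof (intro allI impI)
      fix h :: "nat \<Rightarrow> _" assume h: "inj h \<and> range h \<subseteq> range g"
      define \<sigma> where "\<sigma> = (\<lambda>n. inv_into UNIV g (h n))"
      have h\<sigma>: "h n = g (\<sigma> n)" for n
        using h unfolding \<sigma>_def by (metis f_inv_into_f rangeI subsetD)
      have \<sigma>inj: "inj \<sigma>"
      proof (rule injI)
        fix a b assume "\<sigma> a = \<sigma> b"
        then have "h a = h b" using h\<sigma> by metis
        then show "a = b" using h by (auto dest: injD)
      qed
      show "hyper_multipliable G T h" unfolding hyper_multipliable_def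
      proof
        fix m' :: "nat \<Rightarrow> int"
        define m where "m = (\<lambda>k. if k \<in> range \<sigma> then m' (inv_into UNIV \<sigma> k) else 0)"
        define x where "x = (\<lambda>k. g k [^] m k)"
        have x: "x k \<in> carrier G" for k using g(2) by (auto simp: x_def)
        have x\<sigma>: "x (\<sigma> j) = h j [^] m' j" for j
          using \<sigma>inj by (simp add: x_def m_def h\<sigma>)
        have z: "x k = \<one>" if "k \<notin> range \<sigma>" for k using that by (simp add: x_def m_def)
        have S: "\<exists>l. limitin T (\<lambda>n. finprod G (\<lambda>k. if k \<in> S then x k else \<one>) {..<n}) l sequentially" for S
        proof -
          obtain l where l: "limitin T (\<lambda>n. ordprod G (\<lambda>k. g k [^] (if k\<in>S then m k else 0)) n) l sequentially"
            using g(3) unfolding hyper_multipliable_def by (elim allE[of _ "\<lambda>k. if k\<in>S then m k else 0"]) blast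
          have "ordprod G (\<lambda>k. g k [^] (if k\<in>S then m k else 0)) n
                = finprod G (\<lambda>k. if k \<in> S then x k else \<one>) {..<n}" for n
          proof -
            have "ordprod G (\<lambda>k. g k [^] (if k\<in>S then m k else 0)) n
                = finprod G (\<lambda>k. g k [^] (if k\<in>S then m k else 0)) {..<n}"
              by (rule ordprod_finprod[OF C]) (use g(2) in auto)
            also have "\<dots> = finprod G (\<lambda>k. if k \<in> S then x k else \<one>) {..<n}"
              by (rule finprod_cong) (use g(2) in \<open>auto simp: x_def simp_implies_def\<close>)
            finally show ?thesis .
          qed
          with l show ?thesis by auto
        qed
        obtain l where l: "limitin T (\<lambda>n. finprod G (\<lambda>j. x (\<sigma> j)) {..<n}) l sequentially"
          using rearr[OF H C x S \<sigma>inj z] by blast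
        have "ordprod G (\<lambda>k. h k [^] m' k) n = finprod G (\<lambda>j. x (\<sigma> j)) {..<n}" for n
        proof -
          have hc: "h k \<in> carrier G" for k using h g(2) by blast
          have "ordprod G (\<lambda>k. h k [^] m' k) n = finprod G (\<lambda>k. h k [^] m' k) {..<n}"
            by (rule ordprod_finprod[OF C]) (use hc in auto)
          then show ?thesis by (simp add: x\<sigma>)
        qed
        with l show "\<exists>l. limitin T (\<lambda>n. ordprod G (\<lambda>k. h k [^] m' k) n) l sequentially" by auto
      qed
    qed
    moreover have "infinite (range g)" using g(1) by (simp add: range_inj_infinite)
    ultimately show False using TP g(2) unfolding TAP_def by blast
  qed
  then show ?thesis unfolding HTAP_def by blast
qed

lemma carrier_H:
  assumes "\<And>i. group (D i)"
  shows "carrier (sum_group UNIV D) = {x. (\<forall>i. x i \<in> carrier (D i)) \<and> finite {i. x i \<noteq> \<one>\<^bsub>D i\<^esub>}}"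
  using carrier_sum_group[of UNIV D] assms by (simp add: PiE_UNIV_domain Pi_iff)

lemma topspace_fst:
  assumes "\<And>i. group (D i)"
  shows "topspace (fin_supp_topology D) = carrier (sum_group UNIV D)"
  unfolding fin_supp_topology_def using carrier_H[of D, OF assms] by (auto simp: PiE_UNIV_domain)

lemma mult_H: "x \<otimes>\<^bsub>sum_group UNIV D\<^esub> y = (\<lambda>i. x i \<otimes>\<^bsub>D i\<^esub> y i)"
  by (simp add: restrict_UNIV)

lemma one_H: "\<one>\<^bsub>sum_group UNIV D\<^esub> = (\<lambda>i. \<one>\<^bsub>D i\<^esub>)"
  by (simp add: restrict_UNIV)

lemma inv_H:
  assumes "\<And>i. group (D i)" "x \<in> carrier (sum_group UNIV D)"
  shows "inv\<^bsub>sum_group UNIV D\<^esub> x = (\<lambda>i. inv\<^bsub>D i\<^esub> (x i))"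
  using inv_sum_group[of UNIV D x] assms by (simp add: restrict_UNIV)

lemma limitin_fst_D:
  assumes grp: "\<And>i. group (D i)" and L: "limitin (fin_supp_topology D) f l sequentially"
  shows "l \<in> carrier (sum_group UNIV D)" "\<exists>N. \<forall>n\<ge>N. f n i = l i"
proof -
  from L show l: "l \<in> carrier (sum_group UNIV D)"
    unfolding fin_supp_topology_def limitin_subtopology by auto
  from L have lp: "limitin (product_topology (\<lambda>i. discrete_topology (carrier (D i))) UNIV) f l sequentially"
    unfolding fin_supp_topology_def limitin_subtopology by auto
  then have li: "limitin (discrete_topology (carrier (D i))) (\<lambda>c. f c i) (l i) sequentially"
    by (simp add: limitin_componentwise)
  then have "l i \<in> carrier (D i)" by (simp add: limitin_def)
  with li have "eventually (\<lambda>c. f c i \<in> {l i}) sequentially"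
    unfolding limitin_def by (metis empty_subsetI insert_subset openin_discrete_topology singletonI)
  then show "\<exists>N. \<forall>n\<ge>N. f n i = l i" by (simp add: eventually_sequentially)
qed

lemma limitin_fst_I:
  assumes grp: "\<And>i. group (D i)" and l: "l \<in> carrier (sum_group UNIV D)"
    and f: "\<And>n. f n \<in> carrier (sum_group UNIV D)"
    and ev: "\<And>i. \<exists>N. \<forall>n\<ge>N. f n i = l i"
  shows "limitin (fin_supp_topology D) f l sequentially"
  unfolding fin_supp_topology_def limitin_subtopology limitin_componentwise
proof (intro conjI ballI)
  show "l \<in> carrier (sum_group UNIV D)" by fact
  show "\<forall>\<^sub>F a in sequentially. f a \<in> carrier (sum_group UNIV D)" using f by simp
  show "l \<in> extensional UNIV" by simp
  show "\<forall>\<^sub>F a in sequentially. f a \<in> topspace (product_topology (\<lambda>i. discrete_topology (carrier (D i))) UNIV)"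
    using f carrier_H[of D, OF grp] by (auto simp: PiE_UNIV_domain)
  fix i
  show "limitin (discrete_topology (carrier (D i))) (\<lambda>c. f c i) (l i) sequentially"
    apply (rule limitin_eventually)
    using l carrier_H[of D, OF grp] ev[of i] by (auto simp: eventually_sequentially)
qed

lemma fst_HTG:
  assumes grp: "\<And>i. group (D i)"
  shows "Hausdorff_topological_group (sum_group UNIV D) (fin_supp_topology D)"
proof -
  let ?H = "sum_group UNIV D" let ?T = "fin_supp_topology D"
  let ?P = "product_topology (\<lambda>i. discrete_topology (carrier (D i))) UNIV"
  have T: "?T = subtopology ?P (carrier ?H)" by (simp add: fin_supp_topology_def)
  have ts: "topspace ?T = carrier ?H" by (rule topspace_fst[of D, OF grp])
  have gH: "group ?H" using grp by simp
  have cH: "x \<in> carrier ?H \<Longrightarrow> x i \<in> carrier (D i)" for x i using carrier_H[of D, OF grp] by auto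
  have proj: "continuous_map ?T (discrete_topology (carrier (D k))) (\<lambda>x. x k)" for k
    unfolding T by (rule continuous_map_from_subtopology) (rule continuous_map_product_projection, simp)
  have Hh: "Hausdorff_space ?T" unfolding T
    by (intro Hausdorff_space_subtopology) (simp add: Hausdorff_space_product_topology)
  have cm0: "continuous_map (prod_topology ?T ?T) ?P (\<lambda>p. \<lambda>i. fst p i \<otimes>\<^bsub>D i\<^esub> snd p i)"
    unfolding continuous_map_componentwise_UNIV
  proof
    fix k
    have c1: "continuous_map (prod_topology ?T ?T) (prod_topology (discrete_topology (carrier (D k))) (discrete_topology (carrier (D k)))) (\<lambda>p. (fst p k, snd p k))"
      using continuous_map_compose[OF continuous_map_fst proj] continuous_map_compose[OF continuous_map_snd proj]
      by (intro continuous_map_pairedI) (simp_all add: o_def)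
    have c2: "continuous_map (prod_topology (discrete_topology (carrier (D k))) (discrete_topology (carrier (D k)))) (discrete_topology (carrier (D k))) (\<lambda>(a,b). a \<otimes>\<^bsub>D k\<^esub> b)"
      unfolding prod_topology_discrete_topology[symmetric] using grp[of k]
      by (auto simp: group.is_monoid monoid.m_closed)
    show "continuous_map (prod_topology ?T ?T) (discrete_topology (carrier (D k))) (\<lambda>p. fst p k \<otimes>\<^bsub>D k\<^esub> snd p k)"
      using continuous_map_compose[OF c1 c2] by (simp add: o_def)
  qed
  have "continuous_map (prod_topology ?T ?T) (subtopology ?P (carrier ?H)) (\<lambda>p. \<lambda>i. fst p i \<otimes>\<^bsub>D i\<^esub> snd p i)"
  proof (rule continuous_map_into_subtopology[OF cm0])
    show "(\<lambda>p i. fst p i \<otimes>\<^bsub>D i\<^esub> snd p i) \<in> topspace (prod_topology ?T ?T) \<rightarrow> carrier ?H"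
    proof
      fix p assume "p \<in> topspace (prod_topology ?T ?T)"
      then have "p \<in> topspace ?T \<times> topspace ?T" by (simp only: topspace_prod_topology)
      then have "fst p \<in> carrier ?H" "snd p \<in> carrier ?H" unfolding ts by (simp_all only: mem_Times_iff)
      then have "fst p \<otimes>\<^bsub>?H\<^esub> snd p \<in> carrier ?H" by (rule monoid.m_closed[OF group.is_monoid[OF gH]])
      then show "(\<lambda>i. fst p i \<otimes>\<^bsub>D i\<^esub> snd p i) \<in> carrier ?H" by (simp only: mult_H)
    qed
  qed
  then have "continuous_map (prod_topology ?T ?T) ?T (\<lambda>p. \<lambda>i. fst p i \<otimes>\<^bsub>D i\<^esub> snd p i)"
    by (simp only: T)
  then have cm: "continuous_map (prod_topology ?T ?T) ?T (\<lambda>(x, y). x \<otimes>\<^bsub>?H\<^esub> y)"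
    by (rule continuous_map_eq) (auto simp: mult_H)
  have ci0: "continuous_map ?T ?P (\<lambda>x. \<lambda>i. inv\<^bsub>D i\<^esub> (x i))"
    unfolding continuous_map_componentwise_UNIV
  proof
    fix k
    have c2: "continuous_map (discrete_topology (carrier (D k))) (discrete_topology (carrier (D k))) (\<lambda>a. inv\<^bsub>D k\<^esub> a)"
      using grp[of k] by (auto simp: group.inv_closed)
    show "continuous_map ?T (discrete_topology (carrier (D k))) (\<lambda>x. inv\<^bsub>D k\<^esub> (x k))"
      using continuous_map_compose[OF proj c2] by (simp add: o_def)
  qed
  have "continuous_map ?T (subtopology ?P (carrier ?H)) (\<lambda>x. \<lambda>i. inv\<^bsub>D i\<^esub> (x i))"
  proof (rule continuous_map_into_subtopology[OF ci0])
    show "(\<lambda>x i. inv\<^bsub>D i\<^esub> (x i)) \<in> topspace ?T \<rightarrow> carrier ?H"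
    proof
      fix x assume "x \<in> topspace ?T"
      then have x: "x \<in> carrier ?H" using ts by simp
      then have "inv\<^bsub>?H\<^esub> x \<in> carrier ?H" using group.inv_closed[OF gH] by blast
      then show "(\<lambda>i. inv\<^bsub>D i\<^esub> (x i)) \<in> carrier ?H" using inv_H[of D, OF grp x] by simp
    qed
  qed
  then have "continuous_map ?T ?T (\<lambda>x. \<lambda>i. inv\<^bsub>D i\<^esub> (x i))"
    by (simp only: T)
  then have ci: "continuous_map ?T ?T (\<lambda>x. inv\<^bsub>?H\<^esub> x)"
    by (rule continuous_map_eq) (use inv_H[of D, OF grp] ts in auto)
  show ?thesis unfolding Hausdorff_topological_group_def
    using gH ts Hh cm ci by blast
qed

lemma fst_not_STAP:
  assumes grp: "\<And>i. group (D i)" and nt: "\<And>i. carrier (D i) \<noteq> {\<one>\<^bsub>D i\<^esub>}"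
  shows "\<not> STAP (sum_group UNIV D) (fin_supp_topology D)"
proof -
  let ?H = "sum_group UNIV D" let ?T = "fin_supp_topology D"
  interpret H: group ?H using grp by simp
  have "\<exists>b. b \<in> carrier (D i) \<and> b \<noteq> \<one>\<^bsub>D i\<^esub>" for i
    using nt[of i] group.is_monoid[OF grp[of i]] monoid.one_closed by blast
  then obtain a where a: "\<And>i. a i \<in> carrier (D i)" "\<And>i. a i \<noteq> \<one>\<^bsub>D i\<^esub>" by metis
  define g where "g n = (\<lambda>i. if i = n then a n else \<one>\<^bsub>D i\<^esub>)" for n
  have one_c: "\<one>\<^bsub>D i\<^esub> \<in> carrier (D i)" for i using group.is_monoid[OF grp[of i]] monoid.one_closed by blast
  have gc: "g n \<in> carrier ?H" for n
  proof -
    have "{i. g n i \<noteq> \<one>\<^bsub>D i\<^esub>} \<subseteq> {n}" by (auto simp: g_def)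
    then have "finite {i. g n i \<noteq> \<one>\<^bsub>D i\<^esub>}" by (rule finite_subset) simp
    then show ?thesis using carrier_H[of D, OF grp] a one_c by (simp add: g_def)
  qed
  have ginj: "inj g"
  proof (rule injI)
    fix x y assume "g x = g y"
    then have "g x x = g y x" by simp
    then show "x = y" using a(2)[of x] by (auto simp: g_def split: if_splits)
  qed
  have hom: "(\<lambda>x. x i) \<in> hom ?H (D i)" for i
    unfolding hom_def using carrier_H[of D, OF grp] by (auto simp: mult_H)
  have "hyper_converging ?H ?T g" unfolding hyper_converging_def
  proof
    fix m :: "nat \<Rightarrow> int"
    show "limitin ?T (\<lambda>n. g n [^]\<^bsub>?H\<^esub> m n) \<one>\<^bsub>?H\<^esub> sequentially"
    proof (rule limitin_fst_I[of D, OF grp])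
      show "\<one>\<^bsub>?H\<^esub> \<in> carrier ?H" by (rule H.one_closed)
      show "g n [^]\<^bsub>?H\<^esub> m n \<in> carrier ?H" for n using gc by simp
      fix i
      have "(g n [^]\<^bsub>?H\<^esub> m n) i = \<one>\<^bsub>?H\<^esub> i" if "Suc i \<le> n" for n
      proof -
        have "(g n [^]\<^bsub>?H\<^esub> m n) i = (g n i) [^]\<^bsub>D i\<^esub> m n"
          using hom_int_pow[OF hom[of i] gc[of n] H.is_group grp[of i]] by simp
        also have "\<dots> = \<one>\<^bsub>D i\<^esub>" using that grp[of i] by (simp add: g_def group.int_pow_one)
        finally show ?thesis by (simp add: one_H)
      qed
      then show "\<exists>N. \<forall>n\<ge>N. (g n [^]\<^bsub>?H\<^esub> m n) i = \<one>\<^bsub>?H\<^esub> i" by blast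
    qed
  qed
  then show ?thesis unfolding STAP_def using ginj gc by blast
qed

lemma fst_HTAP:
  assumes grp: "\<And>i. group (D i)"
  shows "HTAP (sum_group UNIV D) (fin_supp_topology D)"
  unfolding HTAP_def
proof
  let ?H = "sum_group UNIV D" let ?T = "fin_supp_topology D"
  interpret H: group ?H using grp by simp
  assume "\<exists>g. inj g \<and> range g \<subseteq> carrier ?H \<and> hyper_multipliable ?H ?T g"
  then obtain g where g: "inj g" "range g \<subseteq> carrier ?H" "hyper_multipliable ?H ?T g" by blast
  have cH: "x \<in> carrier ?H \<longleftrightarrow> (\<forall>i. x i \<in> carrier (D i)) \<and> finite {i. x i \<noteq> \<one>\<^bsub>D i\<^esub>}" for x
    using carrier_H[of D, OF grp] by simp
  have gc: "g n \<in> carrier ?H" for n using g(2) by auto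
  have gcoord: "g n i \<in> carrier (D i)" for n i using gc[of n] cH by blast
  have gfin: "finite {i. g n i \<noteq> \<one>\<^bsub>D i\<^esub>}" for n using gc[of n] cH by blast
  define Pm where "Pm m = (\<lambda>n. ordprod ?H (\<lambda>k. g k [^]\<^bsub>?H\<^esub> m k) n)" for m :: "nat \<Rightarrow> int"
  have Pmc: "Pm m n \<in> carrier ?H" for m n
    unfolding Pm_def by (rule ordprod_closed[OF H.is_group]) (use gc in simp)
  have Pcoord: "Pm m n i \<in> carrier (D i)" for m n i using Pmc[of m n] cH by blast
  have step: "Pm m (Suc n) i = Pm m n i \<otimes>\<^bsub>D i\<^esub> (if m n = 0 then \<one>\<^bsub>D i\<^esub> else g n i)"
    if "m n = 0 \<or> m n = 1" for m n i
    using that gc[of n] by (auto simp: Pm_def mult_H one_H)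
  have Pm0: "Pm m 0 = (\<lambda>i. \<one>\<^bsub>D i\<^esub>)" for m by (simp add: Pm_def restrict_UNIV)
  have lim: "\<exists>l. limitin ?T (Pm m) l sequentially" for m
    using g(3) unfolding hyper_multipliable_def Pm_def by blast
  show False
  proof (cases "\<exists>i. infinite {n. g n i \<noteq> \<one>\<^bsub>D i\<^esub>}")
    case True
    then obtain i where inf: "infinite {n. g n i \<noteq> \<one>\<^bsub>D i\<^esub>}" by blast
    obtain l where l: "limitin ?T (Pm (\<lambda>_. 1)) l sequentially" using lim by blast
    obtain N where N: "\<And>n. N \<le> n \<Longrightarrow> Pm (\<lambda>_. 1) n i = l i"
      using limitin_fst_D(2)[of D, OF grp l, of i] by blast
    have "g n i = \<one>\<^bsub>D i\<^esub>" if "N \<le> n" for n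
    proof -
      have "Pm (\<lambda>_. 1) (Suc n) i = Pm (\<lambda>_. 1) n i \<otimes>\<^bsub>D i\<^esub> g n i" using step[of "\<lambda>_. 1" n i] by simp
      with N[of n] N[of "Suc n"] that have "Pm (\<lambda>_. 1) n i \<otimes>\<^bsub>D i\<^esub> g n i = Pm (\<lambda>_. 1) n i" by simp
      then show ?thesis using group.l_cancel_one[OF grp[of i] Pcoord gcoord] by blast
    qed
    then have "{n. g n i \<noteq> \<one>\<^bsub>D i\<^esub>} \<subseteq> {..<N}" by (auto simp: not_le[symmetric])
    then show False using inf finite_subset by blast
  next
    case False
    then have fin: "finite {n. g n i \<noteq> \<one>\<^bsub>D i\<^esub>}" for i by blast
    have Zex: "\<exists>N. \<forall>n\<ge>N. \<forall>i<M. g n i = \<one>\<^bsub>D i\<^esub>" for M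
    proof -
      let ?U = "\<Union>i<M. {n. g n i \<noteq> \<one>\<^bsub>D i\<^esub>}"
      have fU: "finite ?U" using fin by blast
      show ?thesis
      proof (intro exI allI impI)
        fix n i assume n: "Suc (Max (insert 0 ?U)) \<le> n" and i: "i < M"
        show "g n i = \<one>\<^bsub>D i\<^esub>"
        proof (rule ccontr)
          assume "g n i \<noteq> \<one>\<^bsub>D i\<^esub>"
          then have "n \<in> ?U" using i by blast
          then have "n \<le> Max (insert 0 ?U)" using fU by simp
          then show False using n by simp
        qed
      qed
    qed
    define Z where "Z M = (SOME N. \<forall>n\<ge>N. \<forall>i<M. g n i = \<one>\<^bsub>D i\<^esub>)" for M
    have Zp: "g n i = \<one>\<^bsub>D i\<^esub>" if "Z M \<le> n" "i < M" for M n i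
      using someI_ex[OF Zex[of M]] that unfolding Z_def by blast
    have Bex: "\<exists>b. \<forall>n'\<le>n. \<forall>i\<ge>b. g n' i = \<one>\<^bsub>D i\<^esub>" for n
    proof -
      let ?U = "\<Union>n'\<le>n. {i. g n' i \<noteq> \<one>\<^bsub>D i\<^esub>}"
      have fU: "finite ?U" using gfin by blast
      show ?thesis
      proof (intro exI allI impI)
        fix n' i assume n': "n' \<le> n" and i: "Suc (Max (insert 0 ?U)) \<le> i"
        show "g n' i = \<one>\<^bsub>D i\<^esub>"
        proof (rule ccontr)
          assume "g n' i \<noteq> \<one>\<^bsub>D i\<^esub>"
          then have "i \<in> ?U" using n' by blast
          then have "i \<le> Max (insert 0 ?U)" using fU by simp
          then show False using i by simp
        qed
      qed
    qed
    define Bd where "Bd n = (SOME b. \<forall>n'\<le>n. \<forall>i\<ge>b. g n' i = \<one>\<^bsub>D i\<^esub>)" for n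
    have Bdp: "g n' i = \<one>\<^bsub>D i\<^esub>" if "n' \<le> n" "Bd n \<le> i" for n n' i
      using someI_ex[OF Bex[of n]] that unfolding Bd_def by blast
    have Cex: "\<exists>p. n0 \<le> fst p \<and> M \<le> snd p \<and> g (fst p) (snd p) \<noteq> \<one>\<^bsub>D (snd p)\<^esub>" for n0 M
    proof -
      define n1 where "n1 = max n0 (Z M)"
      have "g n1 \<noteq> g (Suc n1)" using g(1) by (auto dest: injD)
      then have "\<exists>n\<in>{n1, Suc n1}. g n \<noteq> (\<lambda>i. \<one>\<^bsub>D i\<^esub>)" by auto
      then obtain n where n: "n1 \<le> n" "g n \<noteq> (\<lambda>i. \<one>\<^bsub>D i\<^esub>)"
        by (metis insert_iff le_SucI order_refl singletonD)
      then obtain i where i: "g n i \<noteq> \<one>\<^bsub>D i\<^esub>" by auto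
      have "M \<le> i"
      proof (rule ccontr)
        assume "\<not> M \<le> i"
        then have "g n i = \<one>\<^bsub>D i\<^esub>" using Zp[of M n i] n(1) by (simp add: n1_def)
        with i show False by simp
      qed
      then show ?thesis using i n(1) by (intro exI[of _ "(n, i)"]) (simp add: n1_def)
    qed
    define ch where "ch n0 M = (SOME p. n0 \<le> fst p \<and> M \<le> snd p \<and> g (fst p) (snd p) \<noteq> \<one>\<^bsub>D (snd p)\<^esub>)" for n0 M
    have chp: "n0 \<le> fst (ch n0 M)" "M \<le> snd (ch n0 M)" "g (fst (ch n0 M)) (snd (ch n0 M)) \<noteq> \<one>\<^bsub>D (snd (ch n0 M))\<^esub>" for n0 M
      using someI_ex[OF Cex[of n0 M]] unfolding ch_def by blast+
    define st where "st = rec_nat (ch 0 0) (\<lambda>k p. ch (max (Suc (fst p)) (Z (Suc (snd p)))) (max (Suc (snd p)) (Bd (fst p))))"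
    define ns where "ns k = fst (st k)" for k
    define ix where "ix k = snd (st k)" for k
    have st_Suc: "st (Suc k) = ch (max (Suc (ns k)) (Z (Suc (ix k)))) (max (Suc (ix k)) (Bd (ns k)))" for k
      by (simp add: st_def ns_def ix_def)
    have p1: "g (ns k) (ix k) \<noteq> \<one>\<^bsub>D (ix k)\<^esub>" for k
    proof (cases k)
      case 0 then show ?thesis using chp(3)[of 0 0] by (simp add: ns_def ix_def st_def)
    next
      case (Suc k') then show ?thesis using chp(3) by (simp add: ns_def ix_def st_Suc[of k'] del: st_def)
    qed
    have nsS: "Suc (ns k) \<le> ns (Suc k)" "Z (Suc (ix k)) \<le> ns (Suc k)" for k
      using chp(1)[of "max (Suc (ns k)) (Z (Suc (ix k)))" "max (Suc (ix k)) (Bd (ns k))"]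
      by (simp_all add: ns_def[of "Suc k"] st_Suc)
    have isS: "Suc (ix k) \<le> ix (Suc k)" "Bd (ns k) \<le> ix (Suc k)" for k
      using chp(2)[of "max (Suc (ix k)) (Bd (ns k))" "max (Suc (ns k)) (Z (Suc (ix k)))"]
      by (simp_all add: ix_def[of "Suc k"] st_Suc)
    have ns_mono: "strict_mono ns" unfolding strict_mono_Suc_iff using nsS(1) by (simp add: Suc_le_eq)
    have ix_mono: "strict_mono ix" unfolding strict_mono_Suc_iff using isS(1) by (simp add: Suc_le_eq)
    have p3: "g (ns k) (ix j) = \<one>\<^bsub>D (ix j)\<^esub>" if "j \<noteq> k" for j k
    proof (cases "j < k")
      case True
      then have "ns (Suc j) \<le> ns k" using ns_mono by (simp add: strict_mono_less_eq Suc_le_eq)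
      then have "Z (Suc (ix j)) \<le> ns k" using nsS(2)[of j] by linarith
      then show ?thesis by (rule Zp) simp
    next
      case False
      then have "k < j" using that by simp
      then have "ix (Suc k) \<le> ix j" using ix_mono by (simp add: strict_mono_less_eq Suc_le_eq)
      then have "Bd (ns k) \<le> ix j" using isS(2)[of k] by linarith
      then show ?thesis by (rule Bdp[OF order_refl])
    qed
    define m :: "nat \<Rightarrow> int" where "m t = (if t \<in> range ns then 1 else 0)" for t
    have m01: "m t = 0 \<or> m t = 1" for t by (simp add: m_def)
    have coord: "Pm m N (ix j) = (if ns j < N then g (ns j) (ix j) else \<one>\<^bsub>D (ix j)\<^esub>)" for N j
    proof (induction N)
      case 0 then show ?case by (simp add: Pm0)
    next
      case (Suc N)
      have gr: "group (D (ix j))" by (rule grp)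
      have fac: "(if m N = 0 then \<one>\<^bsub>D (ix j)\<^esub> else g N (ix j)) = (if N = ns j then g (ns j) (ix j) else \<one>\<^bsub>D (ix j)\<^esub>)"
      proof (cases "N \<in> range ns")
        case True
        then obtain k where k: "N = ns k" by blast
        show ?thesis
        proof (cases "k = j")
          case True then show ?thesis using k by (simp add: m_def)
        next
          case False
          then have "N \<noteq> ns j" using k strict_mono_eq[OF ns_mono] by auto
          then show ?thesis using k p3[of j k] False by (simp add: m_def)
        qed
      next
        case False
        then have "N \<noteq> ns j" by auto
        then show ?thesis using False by (simp add: m_def)
      qed
      show ?case
        unfolding step[OF m01] fac Suc
        using gcoord[of "ns j" "ix j"] group.is_monoid[OF gr]
        by (auto simp: monoid.l_one monoid.r_one monoid.one_closed)
    qed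
    obtain l where l: "limitin ?T (Pm m) l sequentially" using lim by blast
    have lc: "l \<in> carrier ?H" by (rule limitin_fst_D(1)[of D, OF grp l])
    have "l (ix j) \<noteq> \<one>\<^bsub>D (ix j)\<^esub>" for j
    proof -
      obtain N where N: "\<And>n. N \<le> n \<Longrightarrow> Pm m n (ix j) = l (ix j)"
        using limitin_fst_D(2)[of D, OF grp l, of "ix j"] by blast
      have "Pm m (max N (Suc (ns j))) (ix j) = g (ns j) (ix j)" using coord[of "max N (Suc (ns j))" j] by (simp add: less_max_iff_disj)
      then have "l (ix j) = g (ns j) (ix j)" using N[of "max N (Suc (ns j))"] by simp
      then show ?thesis using p1 by simp
    qed
    then have "range ix \<subseteq> {i. l i \<noteq> \<one>\<^bsub>D i\<^esub>}" by auto
    moreover have "finite {i. l i \<noteq> \<one>\<^bsub>D i\<^esub>}" using lc cH by blast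
    moreover have "infinite (range ix)" using strict_mono_imp_inj_on[OF ix_mono] by (simp add: range_inj_infinite)
    ultimately show False using finite_subset by blast
  qed
qed

lemma fst_FN_finite:
  fixes D :: "nat \<Rightarrow> ('c, 'd) monoid_scheme"
  assumes grp: "\<And>i. group (D i)" and fin: "\<And>i. finite (carrier (D i))"
  shows "finite {x \<in> carrier (sum_group UNIV D). \<forall>i\<ge>N. x i = \<one>\<^bsub>D i\<^esub>}"
proof -
  let ?ext = "\<lambda>f. \<lambda>i. if i < N then f i else \<one>\<^bsub>D i\<^esub>"
  have "{x \<in> carrier (sum_group UNIV D). \<forall>i\<ge>N. x i = \<one>\<^bsub>D i\<^esub>} \<subseteq> ?ext ` (\<Pi>\<^sub>E i\<in>{..<N}. carrier (D i))"
  proof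
    fix x assume x: "x \<in> {x \<in> carrier (sum_group UNIV D). \<forall>i\<ge>N. x i = \<one>\<^bsub>D i\<^esub>}"
    then have xc: "x i \<in> carrier (D i)" for i using carrier_H[of D, OF grp] by auto
    have "x = ?ext (restrict x {..<N})" using x by (auto simp: fun_eq_iff not_less)
    moreover have "restrict x {..<N} \<in> (\<Pi>\<^sub>E i\<in>{..<N}. carrier (D i))" using xc by simp
    ultimately show "x \<in> ?ext ` (\<Pi>\<^sub>E i\<in>{..<N}. carrier (D i))" by blast
  qed
  moreover have "finite (\<Pi>\<^sub>E i\<in>{..<N}. carrier (D i))" using fin by (simp add: finite_PiE)
  ultimately show ?thesis using finite_subset by blast
qed

lemma fst_carrier_UN:
  fixes D :: "nat \<Rightarrow> ('c, 'd) monoid_scheme"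
  assumes grp: "\<And>i. group (D i)"
  shows "carrier (sum_group UNIV D) = (\<Union>N. {x \<in> carrier (sum_group UNIV D). \<forall>i\<ge>N. x i = \<one>\<^bsub>D i\<^esub>})"
proof (intro equalityI subsetI)
  fix x assume x: "x \<in> carrier (sum_group UNIV D)"
  let ?U = "{i. x i \<noteq> \<one>\<^bsub>D i\<^esub>}"
  have fU: "finite ?U" using x carrier_H[of D, OF grp] by auto
  have "\<forall>i\<ge>Suc (Max (insert 0 ?U)). x i = \<one>\<^bsub>D i\<^esub>"
  proof (intro allI impI)
    fix i assume i: "Suc (Max (insert 0 ?U)) \<le> i"
    show "x i = \<one>\<^bsub>D i\<^esub>"
    proof (rule ccontr)
      assume "x i \<noteq> \<one>\<^bsub>D i\<^esub>"
      then have "i \<le> Max (insert 0 ?U)" using fU by simp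
      then show False using i by simp
    qed
  qed
  then show "x \<in> (\<Union>N. {x \<in> carrier (sum_group UNIV D). \<forall>i\<ge>N. x i = \<one>\<^bsub>D i\<^esub>})" using x by blast
qed auto

lemma fst_countable:
  fixes D :: "nat \<Rightarrow> ('c, 'd) monoid_scheme"
  assumes grp: "\<And>i. group (D i)" and fin: "\<And>i. finite (carrier (D i))"
  shows "countable (carrier (sum_group UNIV D))"
  apply (subst fst_carrier_UN[of D, OF grp])
  apply (rule countable_UN[OF countableI_type])
  apply (rule countable_finite)
  by (rule fst_FN_finite[of D, OF grp fin])

lemma fst_metrizable:
  fixes D :: "nat \<Rightarrow> ('c, 'd) monoid_scheme"
  shows "metrizable_space (fin_supp_topology D)"
  unfolding fin_supp_topology_def
  by (intro metrizable_space_subtopology) (simp add: metrizable_space_product_topology)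

lemma fst_comm:
  fixes D :: "nat \<Rightarrow> ('c, 'd) monoid_scheme"
  assumes grp: "\<And>i. group (D i)" and c: "\<And>i. comm_group (D i)"
  shows "comm_group (sum_group UNIV D)"
proof (rule group.group_comm_groupI)
  show "group (sum_group UNIV D)" using grp by simp
  fix x y assume "x \<in> carrier (sum_group UNIV D)" "y \<in> carrier (sum_group UNIV D)"
  then have "x i \<in> carrier (D i)" "y i \<in> carrier (D i)" for i using carrier_H[of D, OF grp] by auto
  then show "x \<otimes>\<^bsub>sum_group UNIV D\<^esub> y = y \<otimes>\<^bsub>sum_group UNIV D\<^esub> x"
    by (simp add: mult_H comm_monoid.m_comm[OF comm_group.axioms(1)[OF c]])
qed

lemma fst_precompact:
  fixes D :: "nat \<Rightarrow> ('c, 'd) monoid_scheme"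
  assumes grp: "\<And>i. group (D i)" and fin: "\<And>i. finite (carrier (D i))"
  shows "precompact_group (sum_group UNIV D) (fin_supp_topology D)"
  unfolding precompact_group_def
proof (intro allI impI)
  let ?H = "sum_group UNIV D"
  let ?P = "product_topology (\<lambda>i. discrete_topology (carrier (D i))) UNIV"
  interpret H: group ?H using grp by simp
  have cH: "x \<in> carrier ?H \<longleftrightarrow> (\<forall>i. x i \<in> carrier (D i)) \<and> finite {i. x i \<noteq> \<one>\<^bsub>D i\<^esub>}" for x
    using carrier_H[of D, OF grp] by simp
  have one_c: "\<one>\<^bsub>D i\<^esub> \<in> carrier (D i)" for i using group.is_monoid[OF grp[of i]] monoid.one_closed by blast
  fix U assume U: "openin (fin_supp_topology D) U \<and> \<one>\<^bsub>?H\<^esub> \<in> U"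
  then obtain U' where U': "openin ?P U'" "U = U' \<inter> carrier ?H"
    unfolding fin_supp_topology_def openin_subtopology by blast
  have "(\<lambda>i. \<one>\<^bsub>D i\<^esub>) \<in> U'" using U U' by (simp add: restrict_UNIV)
  then obtain W where W: "finite {i. W i \<noteq> carrier (D i)}" "\<And>i. W i \<subseteq> carrier (D i)"
     "(\<lambda>i. \<one>\<^bsub>D i\<^esub>) \<in> Pi\<^sub>E UNIV W" "Pi\<^sub>E UNIV W \<subseteq> U'"
    using U'(1) unfolding openin_product_topology_alt by (fastforce)
  define N where "N = Suc (Max (insert 0 {i. W i \<noteq> carrier (D i)}))"
  have WN: "W i = carrier (D i)" if "N \<le> i" for i
  proof (rule ccontr)
    assume "W i \<noteq> carrier (D i)"
    then have "i \<le> Max (insert 0 {i. W i \<noteq> carrier (D i)})" using W(1) by simp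
    then show False using that by (simp add: N_def)
  qed
  have inU: "u \<in> U" if u: "u \<in> carrier ?H" "\<And>i. i < N \<Longrightarrow> u i = \<one>\<^bsub>D i\<^esub>" for u
  proof -
    have "u i \<in> W i" for i
    proof (cases "i < N")
      case True then show ?thesis using u(2) W(3) by (auto simp: PiE_UNIV_domain)
    next
      case False then show ?thesis using WN[of i] u(1) cH by auto
    qed
    then have "u \<in> U'" using W(4) by (auto simp: PiE_UNIV_domain)
    then show ?thesis using U'(2) u(1) by blast
  qed
  let ?F = "{x \<in> carrier ?H. \<forall>i\<ge>N. x i = \<one>\<^bsub>D i\<^esub>}"
  show "\<exists>F. finite F \<and> F \<subseteq> carrier ?H \<and> carrier ?H \<subseteq> (\<Union>x\<in>F. x <#\<^bsub>?H\<^esub> U)"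
  proof (intro exI conjI)
    show "finite ?F" by (rule fst_FN_finite[of D, OF grp fin])
    show "?F \<subseteq> carrier ?H" by blast
    show "carrier ?H \<subseteq> (\<Union>x\<in>?F. x <#\<^bsub>?H\<^esub> U)"
    proof
      fix x assume x: "x \<in> carrier ?H"
      then have xc: "x i \<in> carrier (D i)" and xf: "finite {i. x i \<noteq> \<one>\<^bsub>D i\<^esub>}" for i using cH by auto
      define f where "f = (\<lambda>i. if i < N then x i else \<one>\<^bsub>D i\<^esub>)"
      define u where "u = (\<lambda>i. if i < N then \<one>\<^bsub>D i\<^esub> else x i)"
      have fc: "f \<in> carrier ?H"
      proof -
        have "{i. f i \<noteq> \<one>\<^bsub>D i\<^esub>} \<subseteq> {i. x i \<noteq> \<one>\<^bsub>D i\<^esub>}" by (auto simp: f_def)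
        then have "finite {i. f i \<noteq> \<one>\<^bsub>D i\<^esub>}" using xf finite_subset by blast
        moreover have "\<forall>i. f i \<in> carrier (D i)" using xc one_c by (simp add: f_def)
        ultimately show ?thesis using cH[of f] by blast
      qed
      have uc: "u \<in> carrier ?H"
      proof -
        have "{i. u i \<noteq> \<one>\<^bsub>D i\<^esub>} \<subseteq> {i. x i \<noteq> \<one>\<^bsub>D i\<^esub>}" by (auto simp: u_def)
        then have "finite {i. u i \<noteq> \<one>\<^bsub>D i\<^esub>}" using xf finite_subset by blast
        moreover have "\<forall>i. u i \<in> carrier (D i)" using xc one_c by (simp add: u_def)
        ultimately show ?thesis using cH[of u] by blast
      qed
      have fF: "f \<in> ?F" using fc by (simp add: f_def)
      have uU: "u \<in> U" by (rule inU[OF uc]) (simp add: u_def)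
      have "f \<otimes>\<^bsub>?H\<^esub> u = x"
        using xc grp by (auto simp: mult_H f_def u_def fun_eq_iff group.is_monoid monoid.l_one monoid.r_one)
      then have "x \<in> f <#\<^bsub>?H\<^esub> U" using uU unfolding l_coset_def by blast
      then show "x \<in> (\<Union>x\<in>?F. x <#\<^bsub>?H\<^esub> U)" using fF by blast
    qed
  qed
qed

theorem lemma4p4:
  shows "(\<forall>(G :: ('a, 'b) monoid_scheme) T. Hausdorff_topological_group G T \<longrightarrow>
            (STAP G T \<longrightarrow> HTAP G T) \<and> (HTAP G T \<longrightarrow> TAP G T))
       \<and> (\<forall>(G :: ('a, 'b) monoid_scheme) T. Hausdorff_topological_group G T \<and> comm_group G \<longrightarrow>
            (HTAP G T \<longleftrightarrow> TAP G T))
       \<and> (\<forall>D :: nat \<Rightarrow> ('c, 'd) monoid_scheme.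
            (\<forall>i. group (D i) \<and> carrier (D i) \<noteq> {\<one>\<^bsub>D i\<^esub>}) \<longrightarrow>
              Hausdorff_topological_group (sum_group UNIV D) (fin_supp_topology D)
              \<and> HTAP (sum_group UNIV D) (fin_supp_topology D)
              \<and> \<not> STAP (sum_group UNIV D) (fin_supp_topology D)
              \<and> ((\<forall>i. finite (carrier (D i)) \<and> comm_group (D i)) \<longrightarrow>
                   countable (carrier (sum_group UNIV D))
                   \<and> metrizable_space (fin_supp_topology D)
                   \<and> precompact_group (sum_group UNIV D) (fin_supp_topology D)
                   \<and> comm_group (sum_group UNIV D)
                   \<and> TAP (sum_group UNIV D) (fin_supp_topology D)
                   \<and> \<not> STAP (sum_group UNIV D) (fin_supp_topology D)))"
  apply (intro conjI)
  subgoal using STAP_imp_HTAP HTAP_imp_TAP by blast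
  subgoal using HTAP_imp_TAP TAP_imp_HTAP_comm by blast
  subgoal
    apply (intro allI impI)
    subgoal premises a for D
    proof -
      have grp: "\<And>i. group (D i)" using a by auto
      have nt: "\<And>i. carrier (D i) \<noteq> {\<one>\<^bsub>D i\<^esub>}" using a by auto
      have h1: "HTAP (sum_group UNIV D) (fin_supp_topology D)" by (rule fst_HTAP[of D, OF grp])
      have h2: "TAP (sum_group UNIV D) (fin_supp_topology D)" by (rule HTAP_imp_TAP[OF h1])
      have h3: "\<not> STAP (sum_group UNIV D) (fin_supp_topology D)" by (rule fst_not_STAP[of D, OF grp nt])
      have h4: "Hausdorff_topological_group (sum_group UNIV D) (fin_supp_topology D)" by (rule fst_HTG[of D, OF grp])
      have h5: "(\<forall>i. finite (carrier (D i)) \<and> comm_group (D i)) \<longrightarrow>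
                   countable (carrier (sum_group UNIV D))
                   \<and> metrizable_space (fin_supp_topology D)
                   \<and> precompact_group (sum_group UNIV D) (fin_supp_topology D)
                   \<and> comm_group (sum_group UNIV D)"
      proof
        assume f: "\<forall>i. finite (carrier (D i)) \<and> comm_group (D i)"
        then have fin: "\<And>i. finite (carrier (D i))" and cm: "\<And>i. comm_group (D i)" by auto
        show "countable (carrier (sum_group UNIV D))
                   \<and> metrizable_space (fin_supp_topology D)
                   \<and> precompact_group (sum_group UNIV D) (fin_supp_topology D)
                   \<and> comm_group (sum_group UNIV D)"
          using fst_countable[of D, OF grp fin] fst_metrizable[of D] fst_precompact[of D, OF grp fin]
            fst_comm[of D, OF grp cm] by blast
      qed
      show ?thesis using h1 h2 h3 h4 h5 by blast
    qed
    done
  done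

end
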